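(* Let $\mathcal{X},\mathcal{Y},\mathcal{Z}$ be sets, $\mathcal{G}$ a measurable space of maps $g:\mathcal{X}\to\mathcal{Z}$, $\{h_\theta:\theta\in\mathbb{R}^p\}$ a parametric family of maps $\mathcal{Z}\to\mathbb{R}$, and $\mathcal{H}=\{h_\theta:\|\theta\|\le B\}$. Assume that for every $(x,y,g)$ the map $\theta\mapsto\ell(h_\theta\circ g(x),y)$ is convex, $L$-Lipschitz, and takes values in $[0,C]$. Fix arbitrary datasets $\mathcal{S}_t=((x_{t,1},y_{t,1}),\dots,(x_{t,m_t},y_{t,m_t}))$, $t=1,\dots,T$. Then the EWA-LL algorithm with prior $\pi_1$ and parameter $\eta>0$, using within task $t$ the online gradient algorithm (OGA) with step size $\zeta=\frac{B}{L\sqrt{2m_t}}$, satisfies $$\frac{1}{T}\sum_{t=1}^T \mathbb{E}_{\hat g_t\sim\pi_t}\Big[\frac{1}{m_t}\sum_{i=1}^{m_t}\hat\ell_{t,i}\Big]\le \inf_{\rho}\Bigg\{\mathbb{E}_{g\sim\rho}\Bigg[\frac{1}{T}\sum_{t=1}^T\inf_{h_t\in\mathcal{H}}\frac{1}{m_t}\sum_{i=1}^{m_t}\ell\big(h_t\circ g(x_{t,i}),y_{t,i}\big)+\frac{BL}{T}\sum_{t=1}^T\sqrt{\frac{2}{m_t}}\Bigg]+\frac{\eta C^2}{8}+\frac{\mathcal{K}(\rho,\pi_1)}{\eta T}\Bigg\},$$ the infimum being over all probability measures $\rho$ on $\mathcal{G}$, with $\mathcal{K}$ the Kullback–Leibler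 divergence.
   Context: OGA within task $t$ for representation $g$: $\theta_1=0$; for $i=1,\dots,m_t$, predict $\hat y^g_{t,i}=h_{\theta_i}\circ g(x_{t,i})$, then after $y_{t,i}$ is revealed set $\theta_{i+1}=\theta_i-\zeta\nabla_\theta\ell(h_\theta\circ g(x_{t,i}),y_{t,i})|_{\theta=\theta_i}$, where $\nabla_\theta$ denotes a subgradient. Let $\hat L_t(g)=\frac{1}{m_t}\sum_i\ell(\hat y^g_{t,i},y_{t,i})$. EWA-LL: given a prior probability measure $\pi_1$ on $\mathcal{G}$ and $\eta>0$, for $t=1,\dots,T$: draw $\hat g_t\sim\pi_t$; run OGA on $\mathcal{S}_t$ with representation $\hat g_t$, incurring losses $\hat\ell_{t,i}=\ell(\hat y^{\hat g_t}_{t,i},y_{t,i})$; set $\pi_{t+1}(\mathrm{d}g)\propto\exp(-\eta\hat L_t(g))\pi_t(\mathrm{d}g)$ (normalized to a probability measure). $\mathbb{E}_{\hat g_t\sim\pi_t}$ is the expectation over the random draw of $\hat g_t$. *)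

theory Defs
  imports "HOL-Probability.Probability" "HOL-Analysis.Analysis"
begin

text \<open>Online gradient iterates. oga_iter z G k is theta_(k+1): theta_1 = 0 and
  theta_(i+1) = theta_i - z * G i theta_i, where G i theta is the chosen subgradient
  at theta of the loss on the i-th example.\<close>
primrec oga_iter :: "real \<Rightarrow> (nat \<Rightarrow> real^'p \<Rightarrow> real^'p) \<Rightarrow> nat \<Rightarrow> real^'p" where
  "oga_iter z G 0 = 0"
| "oga_iter z G (Suc k) = oga_iter z G k - z *\<^sub>R G (Suc k) (oga_iter z G k)"

text \<open>Average loss (1/m) sum_i loss(h_(theta_i)(g x_i), y_i) of OGA run with
  representation g and step size z on data D 1, ..., D m.
  sgr g x y theta is a subgradient of theta |-> loss (h theta (g x)) y.\<close>
definition oga_avg_loss ::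
  "(real \<Rightarrow> 'y \<Rightarrow> real) \<Rightarrow> (real^'p \<Rightarrow> 'z \<Rightarrow> real) \<Rightarrow>
   (('x \<Rightarrow> 'z) \<Rightarrow> 'x \<Rightarrow> 'y \<Rightarrow> real^'p \<Rightarrow> real^'p) \<Rightarrow> real \<Rightarrow>
   ('x \<Rightarrow> 'z) \<Rightarrow> (nat \<Rightarrow> 'x \<times> 'y) \<Rightarrow> nat \<Rightarrow> real" where
  "oga_avg_loss loss h sgr z g D m =
     (1 / real m) * (\<Sum>i=1..m.
        loss (h (oga_iter z (\<lambda>j th. sgr g (fst (D j)) (snd (D j)) th) (i - 1)) (g (fst (D i))))
             (snd (D i)))"

definition task_loss ::
  "(real \<Rightarrow> 'y \<Rightarrow> real) \<Rightarrow> (real^'p \<Rightarrow> 'z \<Rightarrow> real) \<Rightarrow>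
   (('x \<Rightarrow> 'z) \<Rightarrow> 'x \<Rightarrow> 'y \<Rightarrow> real^'p \<Rightarrow> real^'p) \<Rightarrow> real \<Rightarrow> real \<Rightarrow>
   (nat \<Rightarrow> nat \<Rightarrow> 'x \<times> 'y) \<Rightarrow> (nat \<Rightarrow> nat) \<Rightarrow> nat \<Rightarrow> ('x \<Rightarrow> 'z) \<Rightarrow> real" where
  "task_loss loss h sgr B L S m t g =
     oga_avg_loss loss h sgr (B / (L * sqrt (2 * real (m t)))) g (S t) (m t)"

definition ewa_update :: "'a measure \<Rightarrow> real \<Rightarrow> ('a \<Rightarrow> real) \<Rightarrow> 'a measure" where
  "ewa_update mu eta Lh =
     density mu (\<lambda>g. ennreal (exp (- eta * Lh g) / (\<integral>g'. exp (- eta * Lh g') \<partial>mu)))"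

text \<open>ewa_seq pi1 eta Lh k is pi_(k+1); Lh t is Lhat_t.\<close>
primrec ewa_seq :: "'a measure \<Rightarrow> real \<Rightarrow> (nat \<Rightarrow> 'a \<Rightarrow> real) \<Rightarrow> nat \<Rightarrow> 'a measure" where
  "ewa_seq pi1 eta Lh 0 = pi1"
| "ewa_seq pi1 eta Lh (Suc k) = ewa_update (ewa_seq pi1 eta Lh k) eta (Lh (Suc k))"

definition kl_div :: "'a measure \<Rightarrow> 'a measure \<Rightarrow> ereal" where
  "kl_div rho mu =
     (if absolutely_continuous mu rho \<and> integrable rho (entropy_density (exp 1) mu rho)
      then ereal (KL_divergence (exp 1) mu rho) else \<infinity>)"

end

theory Submission
  imports Defs
begin


lemma sgr_norm_le:
  fixes f :: "'a::real_inner \<Rightarrow> real"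
  assumes lip: "L-lipschitz_on UNIV f" and sub: "\<forall>th'. f th' \<ge> f th + inner v (th' - th)"
  shows "norm v \<le> L"
proof -
  have 1: "f (th + v) \<ge> f th + (norm v)\<^sup>2" using sub[rule_format, of "th+v"] by (simp add: power2_norm_eq_inner)
  have "dist (f (th + v)) (f th) \<le> L * dist (th + v) th"
    using lipschitz_onD[OF lip] by blast
  hence 2: "f (th + v) - f th \<le> L * norm v" by (simp add: dist_norm dist_real_def)
  have "norm v * norm v \<le> L * norm v" using 1 2 by (simp add: power2_eq_square)
  thus ?thesis
    by (cases "norm v = 0") (use lipschitz_on_nonneg[OF lip] in auto)
qed

lemma norm_step_sq:
  fixes w G :: "'a::real_inner"
  shows "(norm (w - z *\<^sub>R G))\<^sup>2 = (norm w)\<^sup>2 - 2*z*inner G w + z\<^sup>2 * (norm G)\<^sup>2"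
  unfolding power2_norm_eq_inner
  by (simp only: inner_diff_left inner_diff_right inner_scaleR_left inner_scaleR_right)
     (simp add: inner_commute algebra_simps power2_eq_square)

lemma oga_regret:
  fixes l :: "nat \<Rightarrow> real^'p \<Rightarrow> real" and G :: "nat \<Rightarrow> real^'p \<Rightarrow> real^'p"
  assumes sub: "\<And>i th th'. l i th' \<ge> l i th + inner (G i th) (th' - th)"
    and Gb: "\<And>i th. norm (G i th) \<le> L" and z: "z > 0"
  shows "(\<Sum>i=1..k. l i (oga_iter z G (i-1)) - l i u)
     \<le> ((norm u)\<^sup>2 - (norm (oga_iter z G k - u))\<^sup>2)/(2*z) + z*k*L\<^sup>2/2"
proof (induction k)
  case 0
  then show ?case by simp
next
  case (Suc k)
  define w where "w = oga_iter z G k - u"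
  define g where "g = G (Suc k) (oga_iter z G k)"
  have eq: "oga_iter z G (Suc k) - u = w - z *\<^sub>R g" by (simp add: w_def g_def algebra_simps)
  have t1: "l (Suc k) (oga_iter z G k) - l (Suc k) u \<le> inner g w"
    using sub[of "Suc k" "oga_iter z G k" u] by (simp add: g_def w_def inner_diff_right)
  have "2*z*inner g w = (norm w)\<^sup>2 - (norm (w - z *\<^sub>R g))\<^sup>2 + z\<^sup>2 * (norm g)\<^sup>2"
    by (simp add: norm_step_sq)
  hence ig: "inner g w = ((norm w)\<^sup>2 - (norm (w - z *\<^sub>R g))\<^sup>2)/(2*z) + z * (norm g)\<^sup>2 / 2"
    using z by (simp add: field_simps power2_eq_square)
  have "(norm g)\<^sup>2 \<le> L\<^sup>2" using Gb[of "Suc k" "oga_iter z G k"] by (simp add: g_def power_mono)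
  hence "z * (norm g)\<^sup>2 / 2 \<le> z * L\<^sup>2 / 2" using z by simp
  hence t2: "l (Suc k) (oga_iter z G k) - l (Suc k) u \<le> ((norm w)\<^sup>2 - (norm (w - z *\<^sub>R g))\<^sup>2)/(2*z) + z * L\<^sup>2 / 2"
    using t1 ig by linarith
  have "(\<Sum>i=1..Suc k. l i (oga_iter z G (i-1)) - l i u)
      = (\<Sum>i=1..k. l i (oga_iter z G (i-1)) - l i u) + (l (Suc k) (oga_iter z G k) - l (Suc k) u)"
    by simp
  also have "\<dots> \<le> ((norm u)\<^sup>2 - (norm w)\<^sup>2)/(2*z) + z*k*L\<^sup>2/2
       + (((norm w)\<^sup>2 - (norm (w - z *\<^sub>R g))\<^sup>2)/(2*z) + z * L\<^sup>2 / 2)"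
    using Suc t2 unfolding w_def by linarith
  also have "\<dots> = ((norm u)\<^sup>2 - (norm (oga_iter z G (Suc k) - u))\<^sup>2)/(2*z) + z*(Suc k)*L\<^sup>2/2"
    unfolding eq using z by (simp add: field_simps)
  finally show ?case .
qed


lemma sqrt_aux: "n > 0 \<Longrightarrow> sqrt (2 / real n) = sqrt (2 * real n) / real n"
proof (rule real_sqrt_unique)
  assume n: "n > 0"
  show "(sqrt (2 * real n) / real n)\<^sup>2 = 2 / real n"
    using n by (simp add: power_divide power2_eq_square)
qed simp

lemma oga_task_bound:
  fixes u :: "real^'p"
  assumes n: "n > 0" and B: "B > 0" and L: "L > 0"
    and sub: "\<forall>x y th th'. loss (h th' (g x)) y \<ge> loss (h th (g x)) y + inner (sgr g x y th) (th' - th)"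
    and lip: "\<forall>x y. L-lipschitz_on UNIV (\<lambda>th. loss (h th (g x)) y)"
    and u: "norm u \<le> B"
  shows "oga_avg_loss loss h sgr (B/(L * sqrt(2*real n))) g D n
     \<le> (1/real n)*(\<Sum>i=1..n. loss (h u (g (fst (D i)))) (snd (D i))) + B*L * sqrt(2/real n)"
proof -
  define s where "s = sqrt (2 * real n)"
  have s: "s > 0" "s\<^sup>2 = 2 * real n" using n by (auto simp: s_def)
  define z where "z = B / (L * s)"
  have z: "z > 0" using B L s by (simp add: z_def)
  define l where "l = (\<lambda>i th. loss (h th (g (fst (D i)))) (snd (D i)))"
  define G where "G = (\<lambda>i th. sgr g (fst (D i)) (snd (D i)) th)"
  have subl: "\<And>i th th'. l i th' \<ge> l i th + inner (G i th) (th' - th)"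
    using sub by (simp add: l_def G_def)
  have Gb: "\<And>i th. norm (G i th) \<le> L"
  proof -
    fix i th
    show "norm (G i th) \<le> L" unfolding G_def
      by (rule sgr_norm_le[of L "\<lambda>th'. loss (h th' (g (fst (D i)))) (snd (D i))" th]) (use lip sub in auto)
  qed
  have reg: "(\<Sum>i=1..n. l i (oga_iter z G (i-1)) - l i u)
     \<le> ((norm u)\<^sup>2 - (norm (oga_iter z G n - u))\<^sup>2)/(2*z) + z*n*L\<^sup>2/2"
    by (rule oga_regret[OF subl Gb z])
  also have "\<dots> \<le> B\<^sup>2/(2*z) + z*n*L\<^sup>2/2"
  proof -
    have "(norm u)\<^sup>2 \<le> B\<^sup>2" using u by (simp add: power_mono)
    moreover have "0 \<le> (norm (oga_iter z G n - u))\<^sup>2" by simp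
    ultimately have "(norm u)\<^sup>2 - (norm (oga_iter z G n - u))\<^sup>2 \<le> B\<^sup>2" by linarith
    thus ?thesis using z by (auto intro!: divide_right_mono)
  qed
  also have "\<dots> = B*L * s/2 + B*L * s/4"
    using s B L unfolding z_def by (simp add: field_simps power2_eq_square)
  also have "\<dots> \<le> B*L * s" using B L s by simp
  finally have "(\<Sum>i=1..n. l i (oga_iter z G (i-1))) \<le> (\<Sum>i=1..n. l i u) + B*L * s"
    by (simp add: sum_subtractf)
  hence "(1/real n) * (\<Sum>i=1..n. l i (oga_iter z G (i-1))) \<le> (1/real n) * ((\<Sum>i=1..n. l i u) + B*L * s)"
    using n by (intro mult_left_mono) auto
  also have "\<dots> = (1/real n) * (\<Sum>i=1..n. l i u) + B*L * sqrt(2/real n)"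
    using n by (simp add: sqrt_aux s_def field_simps)
  finally show ?thesis
    unfolding oga_avg_loss_def l_def G_def z_def s_def .
qed


lemma inf_ball_measurable:
  fixes \<Phi> :: "real^'p \<Rightarrow> 'g \<Rightarrow> real"
  assumes meas: "\<And>th. \<Phi> th \<in> borel_measurable M"
    and lip: "\<And>g th th'. g \<in> space M \<Longrightarrow> \<Phi> th g \<le> \<Phi> th' g + L * dist th th'"
    and nonneg: "\<And>g th. g \<in> space M \<Longrightarrow> 0 \<le> \<Phi> th g"
    and B: "B > 0" and L: "L > 0"
  shows "(\<lambda>g. INF th\<in>{th. norm th \<le> B}. \<Phi> th g) \<in> borel_measurable M"
proof -
  obtain D :: "(real^'p) set" where D: "countable D" "\<And>X. open X \<Longrightarrow> X \<noteq> {} \<Longrightarrow> \<exists>d \<in> D. d \<in> X"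
    using countable_dense_setE by blast
  define D' where "D' = D \<inter> ball 0 B"
  define A where "A = {th::real^'p. norm th \<le> B}"
  have D'ne: "D' \<noteq> {}" using D(2)[of "ball 0 B"] B unfolding D'_def by auto
  have D'A: "D' \<subseteq> A" unfolding D'_def A_def by auto
  have Ane: "A \<noteq> {}" using B unfolding A_def by (auto intro!: exI[of _ 0])
  have eq: "(INF th\<in>A. \<Phi> th g) = (INF th\<in>D'. \<Phi> th g)" if g: "g \<in> space M" for g
  proof (rule antisym)
    have bA: "bdd_below ((\<lambda>th. \<Phi> th g) ` A)" using nonneg[OF g] by (auto intro: bdd_belowI[of _ 0])
    have bD: "bdd_below ((\<lambda>th. \<Phi> th g) ` D')" using nonneg[OF g] by (auto intro: bdd_belowI[of _ 0])
    show "(INF th\<in>A. \<Phi> th g) \<le> (INF th\<in>D'. \<Phi> th g)"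
      by (rule cINF_superset_mono[OF D'ne bA D'A]) simp
    show "(INF th\<in>D'. \<Phi> th g) \<le> (INF th\<in>A. \<Phi> th g)"
    proof (rule cINF_greatest[OF Ane])
      fix th assume th: "th \<in> A"
      show "(INF th\<in>D'. \<Phi> th g) \<le> \<Phi> th g"
      proof (rule field_le_epsilon)
        fix e :: real assume e: "e > 0"
        define \<delta> where "\<delta> = e / L"
        have \<delta>: "\<delta> > 0" using e L by (simp add: \<delta>_def)
        define lam where "lam = min (1/2) (\<delta> / (2*(B+1)))"
        have lam: "lam > 0" "lam \<le> 1/2" "lam * B < \<delta>"
        proof -
          show "lam > 0" using \<delta> B by (auto simp: lam_def)
          show "lam \<le> 1/2" unfolding lam_def by (rule min.cobounded1)
          have "lam * B \<le> \<delta> / (2*(B+1)) * B" using B by (intro mult_right_mono) (auto simp: lam_def)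
          also have "\<dots> < \<delta>" using B \<delta> by (simp add: field_simps add_pos_pos)
          finally show "lam * B < \<delta>" .
        qed
        define q where "q = (1 - lam) *\<^sub>R th"
        have nth: "norm th \<le> B" using th by (simp add: A_def)
        have "q \<in> ball th \<delta> \<inter> ball 0 B"
        proof -
          have "dist th q = lam * norm th" using lam by (simp add: q_def dist_norm algebra_simps)
          also have "\<dots> \<le> lam * B" using lam nth by (simp add: mult_left_mono)
          finally have 1: "dist th q < \<delta>" using lam by linarith
          have "norm q = (1 - lam) * norm th" using lam by (simp add: q_def)
          also have "\<dots> \<le> (1 - lam) * B" using lam nth by (simp add: mult_left_mono)
          also have "\<dots> < B" using lam B by (simp add: algebra_simps)
          finally show ?thesis using 1 by simp
        qed
        then obtain d where d: "d \<in> D" "d \<in> ball th \<delta> \<inter> ball 0 B"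
          using D(2)[of "ball th \<delta> \<inter> ball 0 B"] by (metis empty_iff open_Int open_ball)
        have dD': "d \<in> D'" using d by (simp add: D'_def)
        have "(INF th\<in>D'. \<Phi> th g) \<le> \<Phi> d g" by (rule cINF_lower[OF bD dD'])
        also have "\<dots> \<le> \<Phi> th g + L * dist d th" by (rule lip[OF g])
        also have "\<dots> \<le> \<Phi> th g + L * \<delta>" using d L by (simp add: dist_commute less_imp_le)
        also have "\<dots> = \<Phi> th g + e" using L by (simp add: \<delta>_def)
        finally show "(INF th\<in>D'. \<Phi> th g) \<le> \<Phi> th g + e" .
      qed
    qed
  qed
  have "(\<lambda>g. INF th\<in>D'. \<Phi> th g) \<in> borel_measurable M"
    by (rule borel_measurable_cINF_real) (use D(1) meas in \<open>auto simp: D'_def\<close>)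
  then show ?thesis
    using measurable_cong[of M "\<lambda>g. INF th\<in>A. \<Phi> th g" "\<lambda>g. INF th\<in>D'. \<Phi> th g"] eq
    unfolding A_def by blast
qed



locale ewa_setup =
  fixes pi1 :: "'a measure" and eta C :: real and T :: nat and Lh :: "nat \<Rightarrow> 'a \<Rightarrow> real"
  assumes P: "prob_space pi1" and eta: "eta > 0"
    and meas: "\<And>t. t \<in> {1..T} \<Longrightarrow> Lh t \<in> borel_measurable pi1"
    and bnd: "\<And>t g. t \<in> {1..T} \<Longrightarrow> g \<in> space pi1 \<Longrightarrow> 0 \<le> Lh t g \<and> Lh t g \<le> C"
begin

interpretation P: prob_space pi1 by (rule P)

definition F :: "nat \<Rightarrow> 'a \<Rightarrow> real" where
  "F k g = exp (- eta * (\<Sum>s=1..k. Lh s g))"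
definition W :: "nat \<Rightarrow> real" where
  "W k = integral\<^sup>L pi1 (F k)"

lemma F_pos: "F k g > 0" by (simp add: F_def)

lemma sum_meas: "k \<le> T \<Longrightarrow> (\<lambda>g. \<Sum>s=1..k. Lh s g) \<in> borel_measurable pi1"
  by (rule borel_measurable_sum) (use meas in auto)

lemma F_meas: "k \<le> T \<Longrightarrow> F k \<in> borel_measurable pi1"
proof -
  assume "k \<le> T"
  note [measurable] = sum_meas[OF this]
  show ?thesis unfolding F_def by measurable
qed

lemma F_le1: "k \<le> T \<Longrightarrow> g \<in> space pi1 \<Longrightarrow> F k g \<le> 1"
proof -
  assume k: "k \<le> T" and g: "g \<in> space pi1"
  have "0 \<le> (\<Sum>s=1..k. Lh s g)" using bnd k g by (intro sum_nonneg) auto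
  thus ?thesis using eta by (simp add: F_def)
qed

lemma F_int: "k \<le> T \<Longrightarrow> integrable pi1 (F k)"
  by (rule P.integrable_const_bound[where B=1]) (auto simp: F_meas F_le1 less_imp_le[OF F_pos])

lemma F_lower: "k \<le> T \<Longrightarrow> g \<in> space pi1 \<Longrightarrow> exp (- eta * (k * C)) \<le> F k g"
proof -
  assume k: "k \<le> T" and g: "g \<in> space pi1"
  have "(\<Sum>s=1..k. Lh s g) \<le> (\<Sum>s=1..k. C)" using bnd k g by (intro sum_mono) auto
  hence "(\<Sum>s=1..k. Lh s g) \<le> k * C" by simp
  hence "- eta * (k * C) \<le> - eta * (\<Sum>s=1..k. Lh s g)" using eta by simp
  thus ?thesis unfolding F_def by simp
qed

lemma W_pos: "k \<le> T \<Longrightarrow> W k > 0"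
proof -
  assume k: "k \<le> T"
  have "exp (- eta * (k * C)) = (\<integral>g. exp (- eta * (k * C)) \<partial>pi1)" by (simp add: P.prob_space)
  also have "\<dots> \<le> W k" unfolding W_def
    by (rule integral_mono) (use F_int[OF k] F_lower[OF k] in auto)
  finally show ?thesis by (metis exp_gt_zero less_le_trans)
qed

lemma F0: "F 0 = (\<lambda>_. 1)" by (auto simp: F_def)

lemma W0: "W 0 = 1" by (simp add: W_def F0 P.prob_space)

lemma F_Suc: "F (Suc k) g = F k g * exp (- eta * Lh (Suc k) g)"
  by (simp add: F_def exp_add[symmetric] algebra_simps)

lemma ewa_density: "k < T \<Longrightarrow> ewa_seq pi1 eta Lh k = density pi1 (\<lambda>g. ennreal (F k g / W k))"
proof (induction k)
  case 0
  then show ?case by (simp add: W0 F_def density_1)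
next
  case (Suc k)
  have k: "k < T" "Suc k \<le> T" "k \<le> T" using Suc.prems by auto
  have IH: "ewa_seq pi1 eta Lh k = density pi1 (\<lambda>g. ennreal (F k g / W k))" using Suc.IH k by simp
  have mLh: "Lh (Suc k) \<in> borel_measurable pi1" using meas k by auto
  have Wk: "W k > 0" "W (Suc k) > 0" using W_pos k by auto
  define Z where "Z = (\<integral>g. exp (- eta * Lh (Suc k) g) \<partial>density pi1 (\<lambda>g. ennreal (F k g / W k)))"
  have "Z = (\<integral>g. (F k g / W k) *\<^sub>R exp (- eta * Lh (Suc k) g) \<partial>pi1)"
    unfolding Z_def
  proof (rule integral_density)
    show "(\<lambda>g. F k g / W k) \<in> borel_measurable pi1" using F_meas[OF k(3)] by simp
    show "AE x in pi1. 0 \<le> F k x / W k" using Wk F_pos by (auto intro!: divide_nonneg_pos less_imp_le)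
  qed (use mLh in simp)
  also have "\<dots> = (\<integral>g. F (Suc k) g / W k \<partial>pi1)" by (simp add: F_Suc)
  also have "\<dots> = W (Suc k) / W k" by (simp add: W_def)
  finally have Z: "Z = W (Suc k) / W k" .
  have "ewa_seq pi1 eta Lh (Suc k) =
     density (density pi1 (\<lambda>g. ennreal (F k g / W k))) (\<lambda>g. ennreal (exp (- eta * Lh (Suc k) g) / Z))"
    by (simp add: IH ewa_update_def Z_def)
  also have "\<dots> = density pi1 (\<lambda>g. ennreal (F k g / W k) * ennreal (exp (- eta * Lh (Suc k) g) / Z))"
    by (rule density_density_eq) (use mLh F_meas[OF k(3)] in simp_all)
  also have "(\<lambda>g. ennreal (F k g / W k) * ennreal (exp (- eta * Lh (Suc k) g) / Z)) = (\<lambda>g. ennreal (F (Suc k) g / W (Suc k)))"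
  proof
    fix g
    have "ennreal (F k g / W k) * ennreal (exp (- eta * Lh (Suc k) g) / Z)
        = ennreal (F k g / W k * (exp (- eta * Lh (Suc k) g) / Z))"
      using Wk F_pos[of k g] Z
      by (subst ennreal_mult[symmetric]) (auto intro!: divide_nonneg_pos less_imp_le)
    also have "F k g / W k * (exp (- eta * Lh (Suc k) g) / Z) = F (Suc k) g / W (Suc k)"
      using Wk Z by (simp add: F_Suc field_simps)
    finally show "ennreal (F k g / W k) * ennreal (exp (- eta * Lh (Suc k) g) / Z) = ennreal (F (Suc k) g / W (Suc k))" .
  qed
  finally show ?case .
qed


lemma Z_eq: "k < T \<Longrightarrow> (\<integral>g. exp (- eta * Lh (Suc k) g) \<partial>density pi1 (\<lambda>g. ennreal (F k g / W k))) = W (Suc k) / W k"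
proof -
  assume kT: "k < T"
  have k: "k < T" "Suc k \<le> T" "k \<le> T" using kT by auto
  have mLh: "Lh (Suc k) \<in> borel_measurable pi1" using meas k by auto
  have Wk: "W k > 0" using W_pos k by auto
  have "(\<integral>g. exp (- eta * Lh (Suc k) g) \<partial>density pi1 (\<lambda>g. ennreal (F k g / W k)))
      = (\<integral>g. (F k g / W k) *\<^sub>R exp (- eta * Lh (Suc k) g) \<partial>pi1)"
  proof (rule integral_density)
    show "(\<lambda>g. F k g / W k) \<in> borel_measurable pi1" using F_meas[OF k(3)] by simp
    show "AE x in pi1. 0 \<le> F k x / W k" using Wk F_pos by (auto intro!: divide_nonneg_pos less_imp_le)
  qed (use mLh in simp)
  also have "\<dots> = (\<integral>g. F (Suc k) g / W k \<partial>pi1)" by (simp add: F_Suc)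
  also have "\<dots> = W (Suc k) / W k" by (simp add: W_def)
  finally show ?thesis .
qed

lemma prob_dens: "k \<le> T \<Longrightarrow> prob_space (density pi1 (\<lambda>g. ennreal (F k g / W k)))"
proof (rule prob_spaceI)
  assume k: "k \<le> T"
  have Wk: "W k > 0" using W_pos k by auto
  have "emeasure (density pi1 (\<lambda>g. ennreal (F k g / W k))) (space (density pi1 (\<lambda>g. ennreal (F k g / W k))))
     = (\<integral>\<^sup>+ g. ennreal (F k g / W k) * indicator (space pi1) g \<partial>pi1)"
    by (subst emeasure_density) (use F_meas[OF k] in auto)
  also have "\<dots> = (\<integral>\<^sup>+ g. ennreal (F k g / W k) \<partial>pi1)"
    by (rule nn_integral_cong) auto
  also have "\<dots> = ennreal (\<integral>g. F k g / W k \<partial>pi1)"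
    by (rule nn_integral_eq_integral) (use F_int[OF k] Wk F_pos in \<open>auto intro!: divide_nonneg_pos less_imp_le\<close>)
  also have "(\<integral>g. F k g / W k \<partial>pi1) = 1" using Wk by (simp add: W_def)
  finally show "emeasure (density pi1 (\<lambda>g. ennreal (F k g / W k))) (space (density pi1 (\<lambda>g. ennreal (F k g / W k)))) = 1" by simp
qed

definition E :: "nat \<Rightarrow> real" where
  "E t = (\<integral>g. Lh t g \<partial>ewa_seq pi1 eta Lh (t-1))"

lemma step_bound:
  assumes t: "t \<in> {1..T}"
  shows "ln (W t) - ln (W (t-1)) \<le> - eta * E t + eta\<^sup>2 * C\<^sup>2 / 8"
proof -
  define k where "k = t - 1"
  have tk: "t = Suc k" using t by (simp add: k_def)
  have k: "k < T" "k \<le> T" using t by (auto simp: k_def)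
  define \<mu> where "\<mu> = density pi1 (\<lambda>g. ennreal (F k g / W k))"
  have seq: "ewa_seq pi1 eta Lh k = \<mu>" using ewa_density[OF k(1)] by (simp add: \<mu>_def)
  have pm: "prob_space \<mu>" using prob_dens[OF k(2)] by (simp add: \<mu>_def)
  interpret M: prob_space \<mu> by (rule pm)
  have mLh[measurable]: "Lh t \<in> borel_measurable \<mu>" using meas[OF t] by (simp add: \<mu>_def)
  have sp: "space \<mu> = space pi1" by (simp add: \<mu>_def)
  have Et: "E t = (\<integral>g. Lh t g \<partial>\<mu>)" unfolding E_def k_def[symmetric] seq ..
  interpret H: interval_bounded_random_variable \<mu> "\<lambda>g. - Lh t g" "-C" 0
  proof (rule interval_bounded_random_variable.intro[OF pm], unfold_locales)
    show "(\<lambda>g. - Lh t g) \<in> borel_measurable \<mu>" by measurable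
    show "AE x in \<mu>. - Lh t x \<in> {- C..0}" using bnd[OF t] sp by (intro AE_I2) auto
  qed
  have hoeff: "(\<integral>\<^sup>+ g. ennreal (exp (eta * (- Lh t g - M.expectation (\<lambda>g. - Lh t g)))) \<partial>\<mu>)
       \<le> ennreal (exp (eta\<^sup>2 * (0 - - C)\<^sup>2 / 8))"
    by (rule H.Hoeffdings_lemma_nn_integral[OF eta])
  have ex: "M.expectation (\<lambda>g. - Lh t g) = - E t" by (simp add: Et)
  have intg: "integrable \<mu> (\<lambda>g. exp (eta * (E t - Lh t g)))"
  proof (rule M.integrable_const_bound[where B="exp (eta * E t)"])
    show "AE x in \<mu>. norm (exp (eta * (E t - Lh t x))) \<le> exp (eta * E t)"
      using bnd[OF t] sp eta by (intro AE_I2) (auto simp: algebra_simps)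
  qed measurable
  have "ennreal (\<integral>g. exp (eta * (E t - Lh t g)) \<partial>\<mu>) = (\<integral>\<^sup>+ g. ennreal (exp (eta * (E t - Lh t g))) \<partial>\<mu>)"
    by (rule nn_integral_eq_integral[symmetric]) (use intg in auto)
  also have "\<dots> \<le> ennreal (exp (eta\<^sup>2 * C\<^sup>2 / 8))" using hoeff by (simp add: ex Et algebra_simps)
  finally have I1: "(\<integral>g. exp (eta * (E t - Lh t g)) \<partial>\<mu>) \<le> exp (eta\<^sup>2 * C\<^sup>2 / 8)" by simp
  have "W t / W k = (\<integral>g. exp (- eta * Lh t g) \<partial>\<mu>)" using Z_eq[OF k(1)] by (simp add: \<mu>_def tk)
  also have "\<dots> = (\<integral>g. exp (- eta * E t) * exp (eta * (E t - Lh t g)) \<partial>\<mu>)"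
    by (simp add: exp_add[symmetric] algebra_simps)
  also have "\<dots> = exp (- eta * E t) * (\<integral>g. exp (eta * (E t - Lh t g)) \<partial>\<mu>)" by simp
  also have "\<dots> \<le> exp (- eta * E t) * exp (eta\<^sup>2 * C\<^sup>2 / 8)" using I1 by simp
  also have "\<dots> = exp (- eta * E t + eta\<^sup>2 * C\<^sup>2 / 8)" by (simp only: exp_add)
  finally have "W t / W k \<le> exp (- eta * E t + eta\<^sup>2 * C\<^sup>2 / 8)" .
  moreover have "W t > 0" "W k > 0" using W_pos k t by auto
  ultimately have "ln (W t / W k) \<le> ln (exp (- eta * E t + eta\<^sup>2 * C\<^sup>2 / 8))"
    by (intro ln_mono) auto
  hence "ln (W t / W k) \<le> - eta * E t + eta\<^sup>2 * C\<^sup>2 / 8" by (simp only: ln_exp)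
  thus ?thesis using \<open>W t > 0\<close> \<open>W k > 0\<close> by (simp add: ln_div k_def)
qed


lemma lnW_bound: "k \<le> T \<Longrightarrow> ln (W k) \<le> - eta * (\<Sum>t=1..k. E t) + k * (eta\<^sup>2 * C\<^sup>2 / 8)"
proof (induction k)
  case 0
  then show ?case by (simp add: W0)
next
  case (Suc k)
  have "ln (W (Suc k)) - ln (W k) \<le> - eta * E (Suc k) + eta\<^sup>2 * C\<^sup>2 / 8"
    using step_bound[of "Suc k"] Suc.prems by simp
  with Suc show ?case by (simp add: algebra_simps)
qed

lemma dv_bound:
  assumes R: "prob_space rho" and sr: "sets rho = sets pi1"
    and ac: "absolutely_continuous pi1 rho"
    and ie: "integrable rho (entropy_density (exp 1) pi1 rho)"
  shows "(\<integral>g. - eta * (\<Sum>s=1..T. Lh s g) \<partial>rho) - KL_divergence (exp 1) pi1 rho \<le> ln (W T)"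
proof -
  interpret R: prob_space rho by (rule R)
  have mr: "\<And>f. f \<in> borel_measurable pi1 \<Longrightarrow> f \<in> borel_measurable rho"
    using measurable_cong_sets[OF sr refl] by blast
  define p where "p = RN_deriv pi1 rho"
  define pr where "pr = (\<lambda>g. enn2real (p g))"
  have pm[measurable]: "p \<in> borel_measurable pi1" by (simp add: p_def)
  have prm: "pr \<in> borel_measurable pi1" unfolding pr_def by measurable
  have dens: "density pi1 p = rho" unfolding p_def by (rule P.density_RN_deriv[OF ac sr])
  have fin: "AE x in pi1. p x \<noteq> \<infinity>" unfolding p_def
    by (rule P.RN_deriv_finite[OF prob_space_imp_sigma_finite[OF R] ac sr])
  have "AE g in density pi1 p. 0 < p g \<and> p g \<noteq> \<infinity>"
    by (subst AE_density[OF pm]) (use fin in \<open>auto elim!: eventually_mono\<close>)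
  hence prpos: "AE g in rho. 0 < pr g" using dens
    by (auto simp: pr_def enn2real_positive_iff top.not_eq_extremum elim!: eventually_mono)
  have KL: "KL_divergence (exp 1) pi1 rho = (\<integral>g. ln (pr g) \<partial>rho)"
    by (simp add: KL_divergence_def entropy_density_def pr_def p_def log_def comp_def)
  have iln: "integrable rho (\<lambda>g. ln (pr g))"
    using ie by (simp add: entropy_density_def pr_def p_def log_def comp_def)
  define phi where "phi = (\<lambda>g. - eta * (\<Sum>s=1..T. Lh s g))"
  have FT: "F T = (\<lambda>g. exp (phi g))" by (simp add: F_def phi_def fun_eq_iff)
  have phim: "phi \<in> borel_measurable pi1"
    using sum_meas[of T] unfolding phi_def by measurable
  have iphi: "integrable rho phi"
  proof (rule R.integrable_const_bound[where B="eta * (T * C)"])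
    show "AE x in rho. norm (phi x) \<le> eta * (T * C)"
    proof (rule AE_I2)
      fix g assume "g \<in> space rho"
      hence g: "g \<in> space pi1" using sets_eq_imp_space_eq[OF sr] by simp
      have "0 \<le> (\<Sum>s=1..T. Lh s g)" using bnd g by (intro sum_nonneg) auto
      moreover have "(\<Sum>s=1..T. Lh s g) \<le> (\<Sum>s=1..T. C)" using bnd g by (intro sum_mono) auto
      ultimately show "norm (phi g) \<le> eta * (T * C)" using eta
        by (simp add: phi_def abs_mult mult_left_mono)
    qed
  qed (rule mr[OF phim])
  define X where "X = (\<lambda>g. phi g - ln (pr g))"
  have iX: "integrable rho X" unfolding X_def using iphi iln by (rule Bochner_Integration.integrable_diff)
  define a where "a = (\<integral>g. X g \<partial>rho)"
  have a_eq: "a = (\<integral>g. phi g \<partial>rho) - KL_divergence (exp 1) pi1 rho"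
    unfolding a_def X_def KL using iphi iln by (simp add: Bochner_Integration.integral_diff)
  define Y where "Y = (\<lambda>g. exp (phi g) / pr g)"
  have Ym: "Y \<in> borel_measurable pi1" unfolding Y_def using phim prm by measurable
  have Yle: "p g * ennreal (Y g) \<le> ennreal (exp (phi g))" for g
  proof (cases "p g")
    case (real r)
    show ?thesis
    proof (cases "r = 0")
      case True then show ?thesis using real by simp
    next
      case False
      hence "r > 0" using real by simp
      hence "ennreal r * ennreal (Y g) = ennreal (r * Y g)"
        by (subst ennreal_mult) (auto simp: Y_def pr_def real)
      also have "r * Y g = exp (phi g)" using \<open>r > 0\<close> by (simp add: Y_def pr_def real)
      finally show ?thesis using real by simp
    qed
  next
    case top
    then show ?thesis by (simp add: Y_def pr_def)
  qed
  have nnY: "(\<integral>\<^sup>+ g. ennreal (Y g) \<partial>rho) \<le> ennreal (W T)"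
  proof -
    have "(\<integral>\<^sup>+ g. ennreal (Y g) \<partial>rho) = (\<integral>\<^sup>+ g. ennreal (Y g) \<partial>density pi1 p)" by (simp add: dens)
    also have "\<dots> = (\<integral>\<^sup>+ g. p g * ennreal (Y g) \<partial>pi1)"
      by (rule nn_integral_density) (use Ym in simp_all)
    also have "\<dots> \<le> (\<integral>\<^sup>+ g. ennreal (exp (phi g)) \<partial>pi1)"
      by (rule nn_integral_mono) (rule Yle)
    also have "\<dots> = ennreal (\<integral>g. exp (phi g) \<partial>pi1)"
      by (rule nn_integral_eq_integral) (use F_int[of T] FT in auto)
    also have "(\<integral>g. exp (phi g) \<partial>pi1) = W T" by (simp add: W_def FT)
    finally show ?thesis .
  qed
  have iY: "integrable rho Y"
  proof (rule integrableI_nonneg)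
    show "Y \<in> borel_measurable rho" by (rule mr[OF Ym])
    show "AE x in rho. 0 \<le> Y x" by (auto simp: Y_def pr_def)
    show "(\<integral>\<^sup>+ g. ennreal (Y g) \<partial>rho) < \<infinity>" using nnY by (simp add: le_less_trans)
  qed
  have intY: "(\<integral>g. Y g \<partial>rho) \<le> W T"
  proof -
    have "ennreal (\<integral>g. Y g \<partial>rho) = (\<integral>\<^sup>+ g. ennreal (Y g) \<partial>rho)"
      by (rule nn_integral_eq_integral[symmetric]) (use iY in \<open>auto simp: Y_def pr_def\<close>)
    also have "\<dots> \<le> ennreal (W T)" by (rule nnY)
    finally show ?thesis using W_pos[of T] by simp
  qed
  have pw: "AE g in rho. exp a * (1 + X g - a) \<le> Y g"
    using prpos
  proof (rule eventually_mono)
    fix g assume pg: "0 < pr g"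
    have "exp a * (1 + X g - a) \<le> exp a * exp (X g - a)"
      using exp_ge_add_one_self[of "X g - a"] by (intro mult_left_mono) (simp_all add: algebra_simps)
    also have "\<dots> = exp (X g)" by (simp add: exp_diff)
    also have "\<dots> = Y g" using pg by (simp add: X_def Y_def exp_diff)
    finally show "exp a * (1 + X g - a) \<le> Y g" .
  qed
  have i1: "integrable rho (\<lambda>g. exp a * (1 + X g - a))"
    using iX by (intro integrable_mult_right) (auto intro!: Bochner_Integration.integrable_diff Bochner_Integration.integrable_add)
  have I1: "(\<integral>g. 1 + X g - a \<partial>rho) = 1"
  proof -
    have eqf: "(\<lambda>g. 1 + X g - a) = (\<lambda>g. (1 - a) + X g)" by (simp add: fun_eq_iff)
    have "(\<integral>g. (1 - a) + X g \<partial>rho) = (1 - a) + a"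
      using iX by (simp add: Bochner_Integration.integral_add R.prob_space a_def)
    thus ?thesis by (simp only: eqf)
  qed
  have "(\<integral>g. exp a * (1 + X g - a) \<partial>rho) = exp a * (\<integral>g. 1 + X g - a \<partial>rho)"
    by (rule integral_mult_right_zero)
  hence "exp a = (\<integral>g. exp a * (1 + X g - a) \<partial>rho)" using I1 by simp
  also have "\<dots> \<le> (\<integral>g. Y g \<partial>rho)" by (rule integral_mono_AE[OF i1 iY pw])
  also have "\<dots> \<le> W T" by (rule intY)
  finally have "exp a \<le> W T" .
  hence "a \<le> ln (W T)" using W_pos[of T] by (simp add: ln_ge_iff)
  thus ?thesis using a_eq by (simp add: phi_def)
qed


lemma ewa_final:
  assumes R: "prob_space rho" and sr: "sets rho = sets pi1"
    and ac: "absolutely_continuous pi1 rho"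
    and ie: "integrable rho (entropy_density (exp 1) pi1 rho)"
  shows "(\<Sum>t=1..T. E t) \<le> (\<integral>g. (\<Sum>s=1..T. Lh s g) \<partial>rho) + T * (eta * C\<^sup>2 / 8) + KL_divergence (exp 1) pi1 rho / eta"
proof -
  have 1: "ln (W T) \<le> - eta * (\<Sum>t=1..T. E t) + T * (eta\<^sup>2 * C\<^sup>2 / 8)" by (rule lnW_bound) simp
  have 2: "(\<integral>g. - eta * (\<Sum>s=1..T. Lh s g) \<partial>rho) - KL_divergence (exp 1) pi1 rho \<le> ln (W T)"
    by (rule dv_bound[OF R sr ac ie])
  have "(\<integral>g. - eta * (\<Sum>s=1..T. Lh s g) \<partial>rho) = - eta * (\<integral>g. (\<Sum>s=1..T. Lh s g) \<partial>rho)"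
    by (rule integral_mult_right_zero)
  with 1 2 have "eta * (\<Sum>t=1..T. E t) \<le> eta * ((\<integral>g. (\<Sum>s=1..T. Lh s g) \<partial>rho) + T * (eta * C\<^sup>2 / 8) + KL_divergence (exp 1) pi1 rho / eta)"
    using eta by (simp add: algebra_simps power2_eq_square)
  thus ?thesis using eta by simp
qed

end


lemma INF_image_h: "(INF f \<in> h ` A. G f) = (INF th \<in> A. G (h th))"
  by (simp add: image_image)

theorem corollary1:
  fixes M :: "('x \<Rightarrow> 'z) measure"
    and pi1 :: "('x \<Rightarrow> 'z) measure"
    and h :: "real^'p \<Rightarrow> 'z \<Rightarrow> real"
    and loss :: "real \<Rightarrow> 'y \<Rightarrow> real"
    and sgr :: "('x \<Rightarrow> 'z) \<Rightarrow> 'x \<Rightarrow> 'y \<Rightarrow> real^'p \<Rightarrow> real^'p"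
    and B L C eta :: real
    and T :: nat
    and m :: "nat \<Rightarrow> nat"
    and S :: "nat \<Rightarrow> nat \<Rightarrow> 'x \<times> 'y"
  assumes prior: "prob_space pi1" "sets pi1 = sets M"
    and B_pos: "B > 0" and L_pos: "L > 0" and eta_pos: "eta > 0"
    and T_pos: "T > 0"
    and m_pos: "\<forall>t\<in>{1..T}. m t > 0"
    and convex: "\<forall>g\<in>space M. \<forall>x y. convex_on UNIV (\<lambda>th. loss (h th (g x)) y)"
    and lipschitz: "\<forall>g\<in>space M. \<forall>x y. L-lipschitz_on UNIV (\<lambda>th. loss (h th (g x)) y)"
    and bounded: "\<forall>g\<in>space M. \<forall>x y th. 0 \<le> loss (h th (g x)) y \<and> loss (h th (g x)) y \<le> C"
    and subgrad: "\<forall>g\<in>space M. \<forall>x y th th'.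
                    loss (h th' (g x)) y \<ge> loss (h th (g x)) y + inner (sgr g x y th) (th' - th)"
    and meas_loss: "\<forall>x y th. (\<lambda>g. loss (h th (g x)) y) \<in> borel_measurable M"
    and meas_Lhat: "\<forall>t\<in>{1..T}. task_loss loss h sgr B L S m t \<in> borel_measurable M"
  shows "ereal ((1 / real T) * (\<Sum>t=1..T.
            \<integral>g. task_loss loss h sgr B L S m t g
              \<partial>(ewa_seq pi1 eta (task_loss loss h sgr B L S m) (t - 1))))
         \<le> (INF rho \<in> {rho. prob_space rho \<and> sets rho = sets M}.
              ereal (\<integral>g. (1 / real T) * (\<Sum>t=1..T.
                        (INF f \<in> h ` {th. norm th \<le> B}.
                           (1 / real (m t)) * (\<Sum>i=1..m t. loss (f (g (fst (S t i)))) (snd (S t i)))))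
                      + B * L / real T * (\<Sum>t=1..T. sqrt (2 / real (m t))) \<partial>rho)
              + ereal (eta * C\<^sup>2 / 8)
              + kl_div rho pi1 / ereal (eta * real T))"
proof -
  define Lh where "Lh = task_loss loss h sgr B L S m"
  define A where "A = {th::real^'p. norm th \<le> B}"
  define Phi where "Phi = (\<lambda>t th g. (1 / real (m t)) * (\<Sum>i=1..m t. loss (h th (g (fst (S t i)))) (snd (S t i))))"
  define Inf' where "Inf' = (\<lambda>t g. INF th \<in> A. Phi t th g)"
  define c where "c = B * L / real T * (\<Sum>t=1..T. sqrt (2 / real (m t)))"
  have spM: "space pi1 = space M" using prior(2) by (rule sets_eq_imp_space_eq)
  have measM: "\<And>f. f \<in> borel_measurable M \<Longrightarrow> f \<in> borel_measurable pi1"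
    using measurable_cong_sets[OF prior(2) refl] by blast
  have Ane: "A \<noteq> {}" using B_pos by (auto simp: A_def intro!: exI[of _ 0])
  have Phi_bnd: "0 \<le> Phi t th g \<and> Phi t th g \<le> C" if t: "t \<in> {1..T}" and g: "g \<in> space M" for t th g
  proof -
    have n: "m t > 0" using m_pos t by auto
    have "0 \<le> (\<Sum>i=1..m t. loss (h th (g (fst (S t i)))) (snd (S t i)))"
      using bounded g by (intro sum_nonneg) auto
    moreover have "(\<Sum>i=1..m t. loss (h th (g (fst (S t i)))) (snd (S t i))) \<le> (\<Sum>i=1..m t. C)"
      using bounded g by (intro sum_mono) auto
    ultimately show ?thesis using n by (auto simp: Phi_def field_simps)
  qed
  have Lh_bnd: "0 \<le> Lh t g \<and> Lh t g \<le> C" if t: "t \<in> {1..T}" and g: "g \<in> space M" for t g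
  proof -
    have n: "m t > 0" using m_pos t by auto
    let ?th = "\<lambda>i. oga_iter (B / (L * sqrt (2 * real (m t))))
          (\<lambda>j th. sgr g (fst (S t j)) (snd (S t j)) th) (i - 1)"
    have "0 \<le> (\<Sum>i=1..m t. loss (h (?th i) (g (fst (S t i)))) (snd (S t i)))"
      using bounded g by (intro sum_nonneg) auto
    moreover have "(\<Sum>i=1..m t. loss (h (?th i) (g (fst (S t i)))) (snd (S t i))) \<le> (\<Sum>i=1..m t. C)"
      using bounded g by (intro sum_mono) auto
    ultimately show ?thesis using n by (auto simp: Lh_def task_loss_def oga_avg_loss_def field_simps)
  qed
  have Inf_bnd: "0 \<le> Inf' t g \<and> Inf' t g \<le> C" if t: "t \<in> {1..T}" and g: "g \<in> space M" for t g
  proof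
    show "0 \<le> Inf' t g" unfolding Inf'_def by (rule cINF_greatest[OF Ane]) (use Phi_bnd[OF t g] in auto)
    have bdd: "bdd_below ((\<lambda>th. Phi t th g) ` A)" using Phi_bnd[OF t g] by (auto intro: bdd_belowI[of _ 0])
    have "0 \<in> A" using B_pos by (simp add: A_def)
    show "Inf' t g \<le> C" unfolding Inf'_def by (rule cINF_lower2[OF bdd \<open>0 \<in> A\<close>]) (use Phi_bnd[OF t g] in auto)
  qed
  have oga: "Lh t g \<le> Inf' t g + B * L * sqrt (2 / real (m t))" if t: "t \<in> {1..T}" and g: "g \<in> space M" for t g
  proof -
    have n: "m t > 0" using m_pos t by auto
    have "Lh t g - B * L * sqrt (2 / real (m t)) \<le> Inf' t g" unfolding Inf'_def
    proof (rule cINF_greatest[OF Ane])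
      fix th assume th: "th \<in> A"
      have "Lh t g \<le> Phi t th g + B * L * sqrt (2 / real (m t))"
        unfolding Lh_def task_loss_def Phi_def
        by (rule oga_task_bound[OF n B_pos L_pos]) (use subgrad lipschitz g th in \<open>auto simp: A_def\<close>)
      thus "Lh t g - B * L * sqrt (2 / real (m t)) \<le> Phi t th g" by simp
    qed
    thus ?thesis by simp
  qed
  have Lh_meas: "Lh t \<in> borel_measurable M" if t: "t \<in> {1..T}" for t
    using meas_Lhat t by (simp add: Lh_def)
  have Inf_meas: "Inf' t \<in> borel_measurable M" if t: "t \<in> {1..T}" for t
  proof -
    have n: "m t > 0" using m_pos t by auto
    show ?thesis unfolding Inf'_def A_def
    proof (rule inf_ball_measurable[OF _ _ _ B_pos L_pos])
      fix th
      show "Phi t th \<in> borel_measurable M" unfolding Phi_def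
        by (intro borel_measurable_times borel_measurable_const borel_measurable_sum) (use meas_loss in auto)
    next
      fix g th th' assume g: "g \<in> space M"
      have "(\<Sum>i=1..m t. loss (h th (g (fst (S t i)))) (snd (S t i)))
          \<le> (\<Sum>i=1..m t. loss (h th' (g (fst (S t i)))) (snd (S t i)) + L * dist th th')"
      proof (rule sum_mono)
        fix i
        have "dist (loss (h th (g (fst (S t i)))) (snd (S t i))) (loss (h th' (g (fst (S t i)))) (snd (S t i))) \<le> L * dist th th'"
          using lipschitz_onD[OF lipschitz[rule_format, OF g]] by blast
        thus "loss (h th (g (fst (S t i)))) (snd (S t i)) \<le> loss (h th' (g (fst (S t i)))) (snd (S t i)) + L * dist th th'"
          by (simp add: dist_real_def)
      qed
      hence "(1 / real (m t)) * (\<Sum>i=1..m t. loss (h th (g (fst (S t i)))) (snd (S t i)))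
          \<le> (1 / real (m t)) * ((\<Sum>i=1..m t. loss (h th' (g (fst (S t i)))) (snd (S t i))) + m t * (L * dist th th'))"
        by (intro mult_left_mono) (auto simp: sum.distrib)
      thus "Phi t th g \<le> Phi t th' g + L * dist th th'" using n by (simp add: Phi_def field_simps)
    next
      fix g th assume g: "g \<in> space M"
      show "0 \<le> Phi t th g" using Phi_bnd[OF t g] by simp
    qed
  qed
  interpret EW: ewa_setup pi1 eta C T Lh
  proof (rule ewa_setup.intro)
    show "prob_space pi1" by (rule prior(1))
    show "eta > 0" by (rule eta_pos)
    show "\<And>t. t \<in> {1..T} \<Longrightarrow> Lh t \<in> borel_measurable pi1" using Lh_meas measM by blast
    show "\<And>t g. t \<in> {1..T} \<Longrightarrow> g \<in> space pi1 \<Longrightarrow> 0 \<le> Lh t g \<and> Lh t g \<le> C" using Lh_bnd spM by blast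
  qed
  have LHS: "(1 / real T) * (\<Sum>t=1..T. \<integral>g. task_loss loss h sgr B L S m t g
              \<partial>(ewa_seq pi1 eta (task_loss loss h sgr B L S m) (t - 1)))
        = (1 / real T) * (\<Sum>t=1..T. EW.E t)"
    unfolding EW.E_def by (simp add: Lh_def)
  define Psi where "Psi = (\<lambda>g. (1 / real T) * (\<Sum>t=1..T.
                        (INF f \<in> h ` {th. norm th \<le> B}.
                           (1 / real (m t)) * (\<Sum>i=1..m t. loss (f (g (fst (S t i)))) (snd (S t i)))))
                      + B * L / real T * (\<Sum>t=1..T. sqrt (2 / real (m t))))"
  have Psi_eq: "Psi = (\<lambda>g. (1 / real T) * (\<Sum>t=1..T. Inf' t g) + c)"
    by (simp add: Psi_def Inf'_def Phi_def A_def c_def INF_image_h)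
  show ?thesis
    unfolding Psi_def[symmetric]
  proof (rule INF_greatest)
    fix rho assume "rho \<in> {rho. prob_space rho \<and> sets rho = sets M}"
    hence R: "prob_space rho" and srM: "sets rho = sets M" by auto
    interpret R: prob_space rho by (rule R)
    have sr: "sets rho = sets pi1" using srM prior(2) by simp
    have spR: "space rho = space M" using srM by (rule sets_eq_imp_space_eq)
    have measR: "\<And>f. f \<in> borel_measurable M \<Longrightarrow> f \<in> borel_measurable rho"
      using measurable_cong_sets[OF srM refl] by blast
    show "ereal ((1 / real T) * (\<Sum>t=1..T. \<integral>g. task_loss loss h sgr B L S m t g
              \<partial>(ewa_seq pi1 eta (task_loss loss h sgr B L S m) (t - 1))))
         \<le> ereal (integral\<^sup>L rho Psi) + ereal (eta * C\<^sup>2 / 8) + kl_div rho pi1 / ereal (eta * real T)"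
    proof (cases "absolutely_continuous pi1 rho \<and> integrable rho (entropy_density (exp 1) pi1 rho)")
      case False
      hence "kl_div rho pi1 = \<infinity>" by (simp add: kl_div_def)
      then show ?thesis using eta_pos T_pos by simp
    next
      case True
      hence ac: "absolutely_continuous pi1 rho" and ie: "integrable rho (entropy_density (exp 1) pi1 rho)" by auto
      define KL where "KL = KL_divergence (exp 1) pi1 rho"
      have kl: "kl_div rho pi1 = ereal KL" using True by (simp add: kl_div_def KL_def)
      have ew: "(\<Sum>t=1..T. EW.E t) \<le> (\<integral>g. (\<Sum>s=1..T. Lh s g) \<partial>rho) + T * (eta * C\<^sup>2 / 8) + KL / eta"
        unfolding KL_def by (rule EW.ewa_final[OF R sr ac ie])
      have sumLm: "(\<lambda>g. (1 / real T) * (\<Sum>s=1..T. Lh s g)) \<in> borel_measurable rho"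
        using Lh_meas measR by (intro borel_measurable_times borel_measurable_const borel_measurable_sum) auto
      have i1: "integrable rho (\<lambda>g. (1 / real T) * (\<Sum>s=1..T. Lh s g))"
      proof (rule R.integrable_const_bound[where B="(1 / real T) * (T * C)"])
        show "AE g in rho. norm ((1 / real T) * (\<Sum>s=1..T. Lh s g)) \<le> (1 / real T) * (T * C)"
        proof (rule AE_I2)
          fix g assume "g \<in> space rho"
          hence g: "g \<in> space M" using spR by simp
          have "0 \<le> (\<Sum>s=1..T. Lh s g)" using Lh_bnd g by (intro sum_nonneg) auto
          moreover have "(\<Sum>s=1..T. Lh s g) \<le> (\<Sum>s=1..T. C)" using Lh_bnd g by (intro sum_mono) auto
          ultimately show "norm ((1 / real T) * (\<Sum>s=1..T. Lh s g)) \<le> (1 / real T) * (T * C)"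
            using T_pos by (simp add: abs_mult field_simps)
        qed
      qed (rule sumLm)
      have Psim: "Psi \<in> borel_measurable rho"
        unfolding Psi_eq using Inf_meas measR
        by (intro borel_measurable_add borel_measurable_times borel_measurable_const borel_measurable_sum) auto
      have i2: "integrable rho Psi"
      proof (rule R.integrable_const_bound[where B="(1 / real T) * (T * C) + \<bar>c\<bar>"])
        show "AE g in rho. norm (Psi g) \<le> (1 / real T) * (T * C) + \<bar>c\<bar>"
        proof (rule AE_I2)
          fix g assume "g \<in> space rho"
          hence g: "g \<in> space M" using spR by simp
          have "0 \<le> (\<Sum>s=1..T. Inf' s g)" using Inf_bnd g by (intro sum_nonneg) auto
          moreover have "(\<Sum>s=1..T. Inf' s g) \<le> (\<Sum>s=1..T. C)" using Inf_bnd g by (intro sum_mono) auto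
          ultimately have "\<bar>(1 / real T) * (\<Sum>s=1..T. Inf' s g)\<bar> \<le> (1 / real T) * (T * C)"
            using T_pos by (simp add: abs_mult field_simps)
          thus "norm (Psi g) \<le> (1 / real T) * (T * C) + \<bar>c\<bar>" unfolding Psi_eq real_norm_def
            using abs_triangle_ineq[of "(1 / real T) * (\<Sum>s=1..T. Inf' s g)" c] by linarith
        qed
      qed (rule Psim)
      have pw: "(1 / real T) * (\<Sum>s=1..T. Lh s g) \<le> Psi g" if g: "g \<in> space rho" for g
      proof -
        have gM: "g \<in> space M" using g spR by simp
        have "(\<Sum>s=1..T. Lh s g) \<le> (\<Sum>s=1..T. Inf' s g + B * L * sqrt (2 / real (m s)))"
          using oga gM by (intro sum_mono) auto
        also have "\<dots> = (\<Sum>s=1..T. Inf' s g) + B * L * (\<Sum>s=1..T. sqrt (2 / real (m s)))"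
          by (simp add: sum.distrib sum_distrib_left)
        finally have "(1 / real T) * (\<Sum>s=1..T. Lh s g) \<le> (1 / real T) * ((\<Sum>s=1..T. Inf' s g) + B * L * (\<Sum>s=1..T. sqrt (2 / real (m s))))"
          by (intro mult_left_mono) auto
        also have "\<dots> = Psi g" unfolding Psi_eq c_def by (simp add: field_simps add_divide_distrib)
        finally show ?thesis .
      qed
      have "(\<integral>g. (1 / real T) * (\<Sum>s=1..T. Lh s g) \<partial>rho) \<le> integral\<^sup>L rho Psi"
        by (rule integral_mono[OF i1 i2 pw])
      hence I: "(1 / real T) * (\<integral>g. (\<Sum>s=1..T. Lh s g) \<partial>rho) \<le> integral\<^sup>L rho Psi" by simp
      have "(1 / real T) * (\<Sum>t=1..T. EW.E t) \<le> (1 / real T) * ((\<integral>g. (\<Sum>s=1..T. Lh s g) \<partial>rho) + T * (eta * C\<^sup>2 / 8) + KL / eta)"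
        using ew by (intro mult_left_mono) auto
      also have "\<dots> = (1 / real T) * (\<integral>g. (\<Sum>s=1..T. Lh s g) \<partial>rho) + eta * C\<^sup>2 / 8 + KL / (eta * real T)"
        using T_pos eta_pos by (simp add: field_simps)
      also have "\<dots> \<le> integral\<^sup>L rho Psi + eta * C\<^sup>2 / 8 + KL / (eta * real T)" using I by simp
      finally have fin: "(1 / real T) * (\<Sum>t=1..T. EW.E t) \<le> integral\<^sup>L rho Psi + eta * C\<^sup>2 / 8 + KL / (eta * real T)" .
      have dv: "ereal KL / ereal (eta * real T) = ereal (KL / (eta * real T))"
        using eta_pos T_pos by simp
      have "ereal ((1 / real T) * (\<Sum>t=1..T. EW.E t)) \<le> ereal (integral\<^sup>L rho Psi + eta * C\<^sup>2 / 8 + KL / (eta * real T))"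
        using fin by (simp only: ereal_less_eq)
      also have "\<dots> = ereal (integral\<^sup>L rho Psi) + ereal (eta * C\<^sup>2 / 8) + ereal KL / ereal (eta * real T)"
        by (simp only: dv plus_ereal.simps)
      finally show ?thesis unfolding LHS kl .
    qed
  qed
qed


end
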